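(* For a positive integer $N$ and $0\le i\le 4$, let $\mathcal S_i$ be the set of pairs $(A,B)$ of $3\times 3$ matrices with entries in $[-N,N]\cap\mathbb{Z}$, written \[ A = \begin{pmatrix} a_1 & a_2 & a_3 \\ a_4 & a_5 & a_6 \\ a_7 & a_8 & a_9 \end{pmatrix},\qquad B = \begin{pmatrix} b_1 & b_2 & b_3 \\ b_4 & b_5 & b_6 \\ b_7 & b_8 & b_9 \end{pmatrix}, \] such that $AB=BA$ and the $6\times 4$ matrix \[ M = \begin{pmatrix} -b_2 & a_2 & 0 & 0 \\ b_4 & -a_4 & 0 & 0 \\ 0 & 0 & -b_3 & a_3 \\ 0 & 0 & b_7 & -a_7 \\ b_8 & -a_8 & -b_8 & a_8 \\ -b_6 & a_6 & b_6 & -a_6 \end{pmatrix} \] has rank $i$. Then there is an absolute constant $C>0$ such that for all integers $N\ge 2$, \[ |\mathcal S_0|+|\mathcal S_1|+|\mathcal S_3| \le C N^9(\log N)^3. \] *)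

theory Defs
  imports "HOL-Analysis.Analysis"
begin

text \<open>3x3 integer matrices are \<open>int^3^3\<close>; entry a_k of the paper with k = 3(i-1)+j
  is \<open>A $ i $ j\<close> for i, j in {1,2,3}.\<close>

definition Mmat :: "int^3^3 \<Rightarrow> int^3^3 \<Rightarrow> real^4^6" where
  "Mmat A B = (let a = (\<lambda>i j. real_of_int (A $ i $ j)); b = (\<lambda>i j. real_of_int (B $ i $ j)) in
     vector [
       vector [- b 1 2, a 1 2, 0, 0],
       vector [b 2 1, - a 2 1, 0, 0],
       vector [0, 0, - b 1 3, a 1 3],
       vector [0, 0, b 3 1, - a 3 1],
       vector [b 3 2, - a 3 2, - b 3 2, a 3 2],
       vector [- b 2 3, a 2 3, b 2 3, - a 2 3]])"

definition S_set :: "int \<Rightarrow> nat \<Rightarrow> ((int^3^3) \<times> (int^3^3)) set" where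
  "S_set N r = {(A, B). (\<forall>i j. \<bar>A $ i $ j\<bar> \<le> N \<and> \<bar>B $ i $ j\<bar> \<le> N) \<and>
      A ** B = B ** A \<and> rank (Mmat A B) = r}"

end

theory Submission
  imports Defs "HOL-Library.FuncSet"
begin

lemma null_coords:
  fixes A :: "real^'n^'m"
  shows "\<exists>J. card J \<le> CARD('n) - rank A \<and> (\<forall>z. A *v z = 0 \<and> (\<forall>j\<in>J. z$j = 0) \<longrightarrow> z = 0)"
proof -
  obtain B0 where B0: "B0 \<subseteq> rows A" "independent B0" "rows A \<subseteq> span B0" "card B0 = dim (rows A)"
    using basis_exists by blast
  define Ax where "Ax = range (\<lambda>j::'n. axis j (1::real))"
  obtain B where B: "B0 \<subseteq> B" "B \<subseteq> B0 \<union> Ax" "independent B" "B0 \<union> Ax \<subseteq> span B"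
    using maximal_independent_subset_extend[of B0 "B0 \<union> Ax"] B0(2) by blast
  have finB: "finite B" using B(3) finiteI_independent by blast
  have "span Ax = UNIV"
  proof -
    have "Ax = Basis" unfolding Ax_def Basis_vec_def by auto
    then show ?thesis by (simp add: span_Basis)
  qed
  then have spanB: "span B = UNIV" using B(4)
    by (metis span_mono span_span sup.boundedE top.extremum_uniqueI)
  have cardB: "card B = CARD('n)"
  proof -
    have "card B = dim (UNIV :: (real^'n) set)"
      using basis_card_eq_dim[of B UNIV] spanB B(3) by auto
    then show ?thesis by simp
  qed
  define J where "J = {j. axis j (1::real) \<in> B - B0}"
  have "card J \<le> card (B - B0)"
  proof (rule card_inj_on_le[of "\<lambda>j. axis j (1::real)"])
    show "inj_on (\<lambda>j. axis j (1::real)) J" by (auto simp: inj_on_def axis_eq_axis)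
    show "(\<lambda>j. axis j 1) ` J \<subseteq> B - B0" unfolding J_def by auto
    show "finite (B - B0)" using finB by auto
  qed
  also have "card (B - B0) = CARD('n) - rank A"
    using card_Diff_subset[of B0 B] B(1) finB cardB B0(4) row_rank_def[of A]
    by (metis finite_subset)
  finally have cJ: "card J \<le> CARD('n) - rank A" .
  have "z = 0" if z: "A *v z = 0" "\<forall>j\<in>J. z$j = 0" for z
  proof -
    have orthB: "orthogonal z b" if "b \<in> B" for b
    proof -
      from that B(2) have "b \<in> B0 \<or> b \<in> Ax - B0" by auto
      then show ?thesis
      proof
        assume "b \<in> B0"
        then have "b \<in> rows A" using B0(1) by auto
        then obtain i where "b = row i A" unfolding rows_def by auto
        then have "b = A $ i" by (simp add: row_def vec_lambda_eta)
        moreover have "(A *v z) $ i = 0" using z(1) by simp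
        ultimately show ?thesis by (simp add: matrix_vector_mul_component orthogonal_def inner_commute)
      next
        assume "b \<in> Ax - B0"
        then obtain j where j: "b = axis j 1" and "axis j (1::real) \<in> B - B0" using \<open>b \<in> B\<close> unfolding Ax_def by auto
        then have "j \<in> J" unfolding J_def by auto
        then show ?thesis using z(2) j by (simp add: orthogonal_def inner_axis)
      qed
    qed
    have "orthogonal z z"
      using orthogonal_to_span[of z B z] orthB spanB by auto
    then show ?thesis by (simp add: orthogonal_def)
  qed
  then show ?thesis using cJ by blast
qed

lemma exhaust_6:
  fixes x :: 6
  shows "x = 1 \<or> x = 2 \<or> x = 3 \<or> x = 4 \<or> x = 5 \<or> x = 6"
proof (induct x)
  case (of_int z)
  then have "z = 0 \<or> z = 1 \<or> z = 2 \<or> z = 3 \<or> z = 4 \<or> z = 5" by fastforce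
  then show ?case by auto
qed

lemma forall_6: "(\<forall>i::6. P i) \<longleftrightarrow> P 1 \<and> P 2 \<and> P 3 \<and> P 4 \<and> P 5 \<and> P 6"
  by (metis exhaust_6)

lemma Mmat_row:
  "Mmat A B $ 1 = vector [- real_of_int (B$1$2), real_of_int (A$1$2), 0, 0]"
  "Mmat A B $ 2 = vector [real_of_int (B$2$1), - real_of_int (A$2$1), 0, 0]"
  "Mmat A B $ 3 = vector [0, 0, - real_of_int (B$1$3), real_of_int (A$1$3)]"
  "Mmat A B $ 4 = vector [0, 0, real_of_int (B$3$1), - real_of_int (A$3$1)]"
  "Mmat A B $ 5 = vector [real_of_int (B$3$2), - real_of_int (A$3$2), - real_of_int (B$3$2), real_of_int (A$3$2)]"
  "Mmat A B $ 6 = vector [- real_of_int (B$2$3), real_of_int (A$2$3), real_of_int (B$2$3), - real_of_int (A$2$3)]"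
  unfolding Mmat_def Let_def by (simp_all add: vector_def)

lemma vec4_simps:
  "(vector [a,b,c,d] :: 'a::zero^4) $ 1 = a"
  "(vector [a,b,c,d] :: 'a::zero^4) $ 2 = b"
  "(vector [a,b,c,d] :: 'a::zero^4) $ 3 = c"
  "(vector [a,b,c,d] :: 'a::zero^4) $ 4 = d"
  by (simp_all add: vector_def)

lemma Mmat_mv_comp:
  "(Mmat A B *v z) $ 1 = - real_of_int (B$1$2) * z$1 + real_of_int (A$1$2) * z$2"
  "(Mmat A B *v z) $ 2 = real_of_int (B$2$1) * z$1 - real_of_int (A$2$1) * z$2"
  "(Mmat A B *v z) $ 3 = - real_of_int (B$1$3) * z$3 + real_of_int (A$1$3) * z$4"
  "(Mmat A B *v z) $ 4 = real_of_int (B$3$1) * z$3 - real_of_int (A$3$1) * z$4"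
  "(Mmat A B *v z) $ 5 = real_of_int (B$3$2) * (z$1 - z$3) - real_of_int (A$3$2) * (z$2 - z$4)"
  "(Mmat A B *v z) $ 6 = - real_of_int (B$2$3) * (z$1 - z$3) + real_of_int (A$2$3) * (z$2 - z$4)"
  by (simp_all only: matrix_vector_mul_component Mmat_row inner_vec_def sum_4 vec4_simps inner_real_def)
     (simp_all add: algebra_simps)

lemma Mmat_mv:
  "Mmat A B *v z = 0 \<longleftrightarrow>
    - real_of_int (B$1$2) * z$1 + real_of_int (A$1$2) * z$2 = 0 \<and>
    real_of_int (B$2$1) * z$1 - real_of_int (A$2$1) * z$2 = 0 \<and>
    - real_of_int (B$1$3) * z$3 + real_of_int (A$1$3) * z$4 = 0 \<and>
    real_of_int (B$3$1) * z$3 - real_of_int (A$3$1) * z$4 = 0 \<and>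
    real_of_int (B$3$2) * (z$1 - z$3) - real_of_int (A$3$2) * (z$2 - z$4) = 0 \<and>
    - real_of_int (B$2$3) * (z$1 - z$3) + real_of_int (A$2$3) * (z$2 - z$4) = 0"
proof -
  have "Mmat A B *v z = 0 \<longleftrightarrow> (\<forall>i. (Mmat A B *v z) $ i = 0)" by (simp add: vec_eq_iff)
  also have "\<dots> \<longleftrightarrow> (Mmat A B *v z) $ 1 = 0 \<and> (Mmat A B *v z) $ 2 = 0 \<and> (Mmat A B *v z) $ 3 = 0 \<and>
     (Mmat A B *v z) $ 4 = 0 \<and> (Mmat A B *v z) $ 5 = 0 \<and> (Mmat A B *v z) $ 6 = 0"
    by (rule forall_6)
  finally show ?thesis by (simp only: Mmat_mv_comp)
qed

lemma comm_eqs: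
  fixes A B :: "int^3^3"
  assumes "A ** B = B ** A"
  shows "A$1$2 * B$2$1 - B$1$2 * A$2$1 + (A$1$3 * B$3$1 - B$1$3 * A$3$1) = 0"
    "A$2$1 * B$1$2 - B$2$1 * A$1$2 + (A$2$3 * B$3$2 - B$2$3 * A$3$2) = 0"
    "B$1$2 * (A$1$1 - A$2$2) - A$1$2 * (B$1$1 - B$2$2) + (A$1$3 * B$3$2 - B$1$3 * A$3$2) = 0"
    "B$2$1 * (A$2$2 - A$1$1) - A$2$1 * (B$2$2 - B$1$1) + (A$2$3 * B$3$1 - B$2$3 * A$3$1) = 0"
    "B$1$3 * (A$1$1 - A$3$3) - A$1$3 * (B$1$1 - B$3$3) + (A$1$2 * B$2$3 - B$1$2 * A$2$3) = 0"
    "B$3$1 * (A$3$3 - A$1$1) - A$3$1 * (B$3$3 - B$1$1) + (A$3$2 * B$2$1 - B$3$2 * A$2$1) = 0"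
    "B$2$3 * (A$2$2 - A$3$3) - A$2$3 * (B$2$2 - B$3$3) + (A$2$1 * B$1$3 - B$2$1 * A$1$3) = 0"
    "B$3$2 * (A$3$3 - A$2$2) - A$3$2 * (B$3$3 - B$2$2) + (A$3$1 * B$1$2 - B$3$1 * A$1$2) = 0"
proof -
  have e: "\<And>i j. A$i$1 * B$1$j + A$i$2 * B$2$j + A$i$3 * B$3$j = B$i$1 * A$1$j + B$i$2 * A$2$j + B$i$3 * A$3$j"
  proof -
    fix i j
    have "(A ** B) $ i $ j = (B ** A) $ i $ j" using assms by simp
    then show "A$i$1 * B$1$j + A$i$2 * B$2$j + A$i$3 * B$3$j = B$i$1 * A$1$j + B$i$2 * A$2$j + B$i$3 * A$3$j"
      by (simp only: matrix_matrix_mult_def vec_lambda_beta sum_3)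
  qed
  show "A$1$2 * B$2$1 - B$1$2 * A$2$1 + (A$1$3 * B$3$1 - B$1$3 * A$3$1) = 0"
    using e[of 1 1] by algebra
  show "A$2$1 * B$1$2 - B$2$1 * A$1$2 + (A$2$3 * B$3$2 - B$2$3 * A$3$2) = 0"
    using e[of 2 2] by algebra
  show "B$1$2 * (A$1$1 - A$2$2) - A$1$2 * (B$1$1 - B$2$2) + (A$1$3 * B$3$2 - B$1$3 * A$3$2) = 0"
    using e[of 1 2] by algebra
  show "B$2$1 * (A$2$2 - A$1$1) - A$2$1 * (B$2$2 - B$1$1) + (A$2$3 * B$3$1 - B$2$3 * A$3$1) = 0"
    using e[of 2 1] by algebra
  show "B$1$3 * (A$1$1 - A$3$3) - A$1$3 * (B$1$1 - B$3$3) + (A$1$2 * B$2$3 - B$1$2 * A$2$3) = 0"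
    using e[of 1 3] by algebra
  show "B$3$1 * (A$3$3 - A$1$1) - A$3$1 * (B$3$3 - B$1$1) + (A$3$2 * B$2$1 - B$3$2 * A$2$1) = 0"
    using e[of 3 1] by algebra
  show "B$2$3 * (A$2$2 - A$3$3) - A$2$3 * (B$2$2 - B$3$3) + (A$2$1 * B$1$3 - B$2$1 * A$1$3) = 0"
    using e[of 2 3] by algebra
  show "B$3$2 * (A$3$3 - A$2$2) - A$3$2 * (B$3$3 - B$2$2) + (A$3$1 * B$1$2 - B$3$1 * A$1$2) = 0"
    using e[of 3 2] by algebra
qed

lemma Mmat_ent:
  "Mmat A B $ 1 $ 1 = - real_of_int (B$1$2)" "Mmat A B $ 1 $ 2 = real_of_int (A$1$2)"
  "Mmat A B $ 1 $ 3 = 0" "Mmat A B $ 1 $ 4 = 0"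
  "Mmat A B $ 2 $ 1 = real_of_int (B$2$1)" "Mmat A B $ 2 $ 2 = - real_of_int (A$2$1)"
  "Mmat A B $ 2 $ 3 = 0" "Mmat A B $ 2 $ 4 = 0"
  "Mmat A B $ 3 $ 1 = 0" "Mmat A B $ 3 $ 2 = 0"
  "Mmat A B $ 3 $ 3 = - real_of_int (B$1$3)" "Mmat A B $ 3 $ 4 = real_of_int (A$1$3)"
  "Mmat A B $ 4 $ 1 = 0" "Mmat A B $ 4 $ 2 = 0"
  "Mmat A B $ 4 $ 3 = real_of_int (B$3$1)" "Mmat A B $ 4 $ 4 = - real_of_int (A$3$1)"
  "Mmat A B $ 5 $ 1 = real_of_int (B$3$2)" "Mmat A B $ 5 $ 2 = - real_of_int (A$3$2)"
  "Mmat A B $ 5 $ 3 = - real_of_int (B$3$2)" "Mmat A B $ 5 $ 4 = real_of_int (A$3$2)"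
  "Mmat A B $ 6 $ 1 = - real_of_int (B$2$3)" "Mmat A B $ 6 $ 2 = real_of_int (A$2$3)"
  "Mmat A B $ 6 $ 3 = real_of_int (B$2$3)" "Mmat A B $ 6 $ 4 = - real_of_int (A$2$3)"
  by (simp_all only: Mmat_row vec4_simps)

lemma groups_par:
  fixes A B :: "int^3^3"
  assumes comm: "A ** B = B ** A" and rk: "rank (Mmat A B) \<noteq> 4"
  shows "A$1$2 * B$2$1 = B$1$2 * A$2$1" "A$1$3 * B$3$1 = B$1$3 * A$3$1" "A$2$3 * B$3$2 = B$2$3 * A$3$2"
proof -
  note ce = comm_eqs[OF comm]
  define c where "c = A$1$2 * B$2$1 - B$1$2 * A$2$1"
  define d where "d = A$1$3 * B$3$1 - B$1$3 * A$3$1"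
  have cd: "c + d = 0" using ce(1) unfolding c_def d_def by simp
  have c0: "c = 0"
  proof (rule ccontr)
    assume cn: "c \<noteq> 0"
    then have dn: "d \<noteq> 0" using cd by simp
    have "inj ((*v) (Mmat A B))"
    proof (rule injI)
      fix x y assume xy: "Mmat A B *v x = Mmat A B *v y"
      define z where "z = x - y"
      have "Mmat A B *v z = 0" using xy unfolding z_def by (simp add: matrix_vector_mult_diff_distrib)
      then have eqs: "- real_of_int (B$1$2) * z$1 + real_of_int (A$1$2) * z$2 = 0"
        "real_of_int (B$2$1) * z$1 - real_of_int (A$2$1) * z$2 = 0"
        "- real_of_int (B$1$3) * z$3 + real_of_int (A$1$3) * z$4 = 0"
        "real_of_int (B$3$1) * z$3 - real_of_int (A$3$1) * z$4 = 0"
        unfolding Mmat_mv by auto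
      have "real_of_int c * z$1 = real_of_int (A$2$1) * (- real_of_int (B$1$2) * z$1 + real_of_int (A$1$2) * z$2)
          + real_of_int (A$1$2) * (real_of_int (B$2$1) * z$1 - real_of_int (A$2$1) * z$2)"
        unfolding c_def by (simp add: algebra_simps)
      then have z1: "z$1 = 0" using eqs cn by simp
      have "real_of_int c * z$2 = real_of_int (B$2$1) * (- real_of_int (B$1$2) * z$1 + real_of_int (A$1$2) * z$2)
          + real_of_int (B$1$2) * (real_of_int (B$2$1) * z$1 - real_of_int (A$2$1) * z$2)"
        unfolding c_def by (simp add: algebra_simps)
      then have z2: "z$2 = 0" using eqs cn by simp
      have "real_of_int d * z$3 = real_of_int (A$3$1) * (- real_of_int (B$1$3) * z$3 + real_of_int (A$1$3) * z$4)
          + real_of_int (A$1$3) * (real_of_int (B$3$1) * z$3 - real_of_int (A$3$1) * z$4)"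
        unfolding d_def by (simp add: algebra_simps)
      then have z3: "z$3 = 0" using eqs dn by simp
      have "real_of_int d * z$4 = real_of_int (B$3$1) * (- real_of_int (B$1$3) * z$3 + real_of_int (A$1$3) * z$4)
          + real_of_int (B$1$3) * (real_of_int (B$3$1) * z$3 - real_of_int (A$3$1) * z$4)"
        unfolding d_def by (simp add: algebra_simps)
      then have z4: "z$4 = 0" using eqs dn by simp
      have "z = 0" using z1 z2 z3 z4 by (simp add: vec_eq_iff forall_4)
      then show "x = y" unfolding z_def by simp
    qed
    then have "rank (Mmat A B) = 4" using full_rank_injective[of "Mmat A B"] by simp
    then show False using rk by simp
  qed
  show "A$1$2 * B$2$1 = B$1$2 * A$2$1" using c0 unfolding c_def by simp
  show "A$1$3 * B$3$1 = B$1$3 * A$3$1" using c0 cd unfolding d_def by simp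
  show "A$2$3 * B$3$2 = B$2$3 * A$3$2" using c0 ce(2) unfolding c_def by algebra
qed

lemma two_rows:
  fixes M :: "real^'n^'m"
  assumes rk: "rank M \<le> 1" and "M$i$k = 0" "M$j$k \<noteq> 0" "M$i$l \<noteq> 0"
  shows False
proof -
  have rs: "{M$j, M$i} \<subseteq> rows M" unfolding rows_def row_def by (auto simp: vec_lambda_eta)
  have ne: "M$j \<noteq> M$i" using assms by auto
  have r0: "M$i \<noteq> 0" using assms by auto
  have "M$j \<notin> span {M$i}"
  proof
    assume "M$j \<in> span {M$i}"
    then obtain c where "M$j = c *\<^sub>R M$i" by (auto simp: span_singleton)
    then have "M$j$k = c * M$i$k" by simp
    then show False using assms by simp
  qed
  then have "independent {M$j, M$i}" using ne r0 by (simp add: independent_insert)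
  then have "card {M$j, M$i} \<le> dim (rows M)" using independent_card_le_dim[OF rs] by blast
  then have "2 \<le> rank M" using ne by (simp add: row_rank_def)
  then show False using rk by simp
qed

definition g1nz :: "int^3^3 \<Rightarrow> int^3^3 \<Rightarrow> bool" where
  "g1nz A B \<longleftrightarrow> \<not> (A$1$2 = 0 \<and> B$1$2 = 0 \<and> A$2$1 = 0 \<and> B$2$1 = 0)"
definition g2nz :: "int^3^3 \<Rightarrow> int^3^3 \<Rightarrow> bool" where
  "g2nz A B \<longleftrightarrow> \<not> (A$1$3 = 0 \<and> B$1$3 = 0 \<and> A$3$1 = 0 \<and> B$3$1 = 0)"
definition g3nz :: "int^3^3 \<Rightarrow> int^3^3 \<Rightarrow> bool" where
  "g3nz A B \<longleftrightarrow> \<not> (A$2$3 = 0 \<and> B$2$3 = 0 \<and> A$3$2 = 0 \<and> B$3$2 = 0)"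

lemma rank_le1_groups:
  fixes A B :: "int^3^3"
  assumes rk: "rank (Mmat A B) \<le> 1"
  shows "\<not> (g1nz A B \<and> g2nz A B)" "\<not> (g1nz A B \<and> g3nz A B)" "\<not> (g2nz A B \<and> g3nz A B)"
proof -
  note tr = two_rows[OF rk]
  have G1: "\<exists>i l. i \<in> {1,2} \<and> Mmat A B $ i $ l \<noteq> 0" if "g1nz A B"
    using that unfolding g1nz_def
    by (metis Mmat_ent(1,2,5,6) insertCI neg_equal_0_iff_equal of_int_eq_0_iff)
  have G2: "\<exists>i l. i \<in> {3,4} \<and> l \<in> {3,4} \<and> Mmat A B $ i $ l \<noteq> 0" if "g2nz A B"
    using that unfolding g2nz_def
    by (metis Mmat_ent(11,12,15,16) insertCI neg_equal_0_iff_equal of_int_eq_0_iff)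
  have G2': "\<exists>i l. i \<in> {3,4} \<and> Mmat A B $ i $ l \<noteq> 0" if "g2nz A B"
    using G2[OF that] by blast
  have G3a: "\<exists>i l. i \<in> {5,6} \<and> l \<in> {3,4} \<and> Mmat A B $ i $ l \<noteq> 0" if "g3nz A B"
    using that unfolding g3nz_def
    by (metis Mmat_ent(19,20,23,24) insertCI neg_equal_0_iff_equal of_int_eq_0_iff)
  have G3b: "\<exists>i l. i \<in> {5,6} \<and> l \<in> {1,2} \<and> Mmat A B $ i $ l \<noteq> 0" if "g3nz A B"
    using that unfolding g3nz_def
    by (metis Mmat_ent(17,18,21,22) insertCI neg_equal_0_iff_equal of_int_eq_0_iff)
  have Z12: "Mmat A B $ i $ k = 0" if "i \<in> {1,2}" "k \<in> {3,4}" for i k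
    using that by (auto simp: Mmat_ent)
  have Z34: "Mmat A B $ i $ k = 0" if "i \<in> {3,4}" "k \<in> {1,2}" for i k
    using that by (auto simp: Mmat_ent)
  show "\<not> (g1nz A B \<and> g2nz A B)"
  proof
    assume h: "g1nz A B \<and> g2nz A B"
    obtain i l where il: "i \<in> {1,2}" "Mmat A B $ i $ l \<noteq> 0" using G1 h by blast
    obtain j k where jk: "j \<in> {3,4}" "k \<in> {3,4}" "Mmat A B $ j $ k \<noteq> 0" using G2 h by blast
    show False using tr[of i k j l] Z12[OF il(1) jk(2)] jk(3) il(2) by blast
  qed
  show "\<not> (g1nz A B \<and> g3nz A B)"
  proof
    assume h: "g1nz A B \<and> g3nz A B"
    obtain i l where il: "i \<in> {1,2}" "Mmat A B $ i $ l \<noteq> 0" using G1 h by blast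
    obtain j k where jk: "j \<in> {5,6}" "k \<in> {3,4}" "Mmat A B $ j $ k \<noteq> 0" using G3a h by blast
    show False using tr[of i k j l] Z12[OF il(1) jk(2)] jk(3) il(2) by blast
  qed
  show "\<not> (g2nz A B \<and> g3nz A B)"
  proof
    assume h: "g2nz A B \<and> g3nz A B"
    obtain i l where il: "i \<in> {3,4}" "Mmat A B $ i $ l \<noteq> 0" using G2' h by blast
    obtain j k where jk: "j \<in> {5,6}" "k \<in> {1,2}" "Mmat A B $ j $ k \<noteq> 0" using G3b h by blast
    show False using tr[of i k j l] Z34[OF il(1) jk(2)] jk(3) il(2) by blast
  qed
qed

lemma rank0_zero:
  fixes A B :: "int^3^3"
  assumes "rank (Mmat A B) = 0"
  shows "\<not> g1nz A B \<and> \<not> g2nz A B \<and> \<not> g3nz A B"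
proof -
  have M0: "Mmat A B = 0" using assms rank_eq_0 by blast
  have "\<And>i k. Mmat A B $ i $ k = 0" using M0 by simp
  then show ?thesis unfolding g1nz_def g2nz_def g3nz_def
    by (metis Mmat_ent neg_equal_0_iff_equal of_int_eq_0_iff)
qed

definition key :: "((int^3^3) \<times> (int^3^3)) \<Rightarrow> ((int\<times>int)\<times>(int\<times>int)) \<times> ((int\<times>int)\<times>(int\<times>int)) \<times> ((int\<times>int)\<times>(int\<times>int)) \<times> (int\<times>int)" where
  "key x = (case x of (A,B) \<Rightarrow> (((A$1$2,B$1$2),(A$2$1,B$2$1)), ((A$1$3,B$1$3),(A$3$1,B$3$1)),
      ((A$2$3,B$2$3),(A$3$2,B$3$2)), (A$3$3,B$3$3)))"

definition dl :: "((int^3^3) \<times> (int^3^3)) \<Rightarrow> int^4" where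
  "dl x = (case x of (A,B) \<Rightarrow> vector [A$1$1 - A$2$2, B$1$1 - B$2$2, A$1$1 - A$3$3, B$1$1 - B$3$3])"

lemma dl_simps:
  "dl (A,B) $ 1 = A$1$1 - A$2$2" "dl (A,B) $ 2 = B$1$1 - B$2$2"
  "dl (A,B) $ 3 = A$1$1 - A$3$3" "dl (A,B) $ 4 = B$1$1 - B$3$3"
  by (simp_all add: dl_def vec4_simps)

lemma key_eq:
  "key (A,B) = key (A',B') \<longleftrightarrow> A$1$2 = A'$1$2 \<and> B$1$2 = B'$1$2 \<and> A$2$1 = A'$2$1 \<and> B$2$1 = B'$2$1 \<and>
     A$1$3 = A'$1$3 \<and> B$1$3 = B'$1$3 \<and> A$3$1 = A'$3$1 \<and> B$3$1 = B'$3$1 \<and>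
     A$2$3 = A'$2$3 \<and> B$2$3 = B'$2$3 \<and> A$3$2 = A'$3$2 \<and> B$3$2 = B'$3$2 \<and> A$3$3 = A'$3$3 \<and> B$3$3 = B'$3$3"
  by (auto simp: key_def)

lemma key_dl_inj:
  assumes "key x = key y" "dl x = dl y"
  shows "x = y"
proof -
  obtain A B A' B' where xy: "x = (A,B)" "y = (A',B')" by (cases x, cases y) auto
  have k: "A$1$2 = A'$1$2 \<and> B$1$2 = B'$1$2 \<and> A$2$1 = A'$2$1 \<and> B$2$1 = B'$2$1 \<and>
     A$1$3 = A'$1$3 \<and> B$1$3 = B'$1$3 \<and> A$3$1 = A'$3$1 \<and> B$3$1 = B'$3$1 \<and>
     A$2$3 = A'$2$3 \<and> B$2$3 = B'$2$3 \<and> A$3$2 = A'$3$2 \<and> B$3$2 = B'$3$2 \<and> A$3$3 = A'$3$3 \<and> B$3$3 = B'$3$3"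
    using assms(1) xy key_eq by simp
  have d: "dl (A,B) $ i = dl (A',B') $ i" for i using assms(2) xy by simp
  have "A$1$1 = A'$1$1" "A$2$2 = A'$2$2" "B$1$1 = B'$1$1" "B$2$2 = B'$2$2"
    using d[of 1] d[of 2] d[of 3] d[of 4] k by (simp_all add: dl_simps)
  with k have "A = A'" "B = B'" by (simp_all add: vec_eq_iff forall_3)
  then show ?thesis using xy by simp
qed

lemma key_Mmat:
  assumes "key (A,B) = key (A',B')"
  shows "Mmat A B = Mmat A' B'"
  using assms unfolding key_eq Mmat_def by simp

lemma comm_diff:
  fixes A B A' B' :: "int^3^3"
  assumes c1: "A ** B = B ** A" and c2: "A' ** B' = B' ** A'" and k: "key (A,B) = key (A',B')"
  shows "Mmat A B *v (\<chi> j. real_of_int (dl (A,B) $ j - dl (A',B') $ j)) = 0"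
proof -
  note e = comm_eqs[OF c1] and e' = comm_eqs[OF c2]
  note kk = k[unfolded key_eq]
  have i1: "B$1$2 * ((A$1$1 - A$2$2) - (A'$1$1 - A'$2$2)) - A$1$2 * ((B$1$1 - B$2$2) - (B'$1$1 - B'$2$2)) = 0"
    using e(3) e'(3) kk by algebra
  have i2: "B$2$1 * ((A$1$1 - A$2$2) - (A'$1$1 - A'$2$2)) - A$2$1 * ((B$1$1 - B$2$2) - (B'$1$1 - B'$2$2)) = 0"
    using e(4) e'(4) kk by algebra
  have i3: "B$1$3 * ((A$1$1 - A$3$3) - (A'$1$1 - A'$3$3)) - A$1$3 * ((B$1$1 - B$3$3) - (B'$1$1 - B'$3$3)) = 0"
    using e(5) e'(5) kk by algebra
  have i4: "B$3$1 * ((A$1$1 - A$3$3) - (A'$1$1 - A'$3$3)) - A$3$1 * ((B$1$1 - B$3$3) - (B'$1$1 - B'$3$3)) = 0"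
    using e(6) e'(6) kk by algebra
  have i5: "B$2$3 * ((A$2$2 - A$3$3) - (A'$2$2 - A'$3$3)) - A$2$3 * ((B$2$2 - B$3$3) - (B'$2$2 - B'$3$3)) = 0"
    using e(7) e'(7) kk by algebra
  have i6: "B$3$2 * ((A$2$2 - A$3$3) - (A'$2$2 - A'$3$3)) - A$3$2 * ((B$2$2 - B$3$3) - (B'$2$2 - B'$3$3)) = 0"
    using e(8) e'(8) kk by algebra
  show ?thesis unfolding Mmat_mv
  proof (simp only: vec_lambda_beta dl_simps, intro conjI)
    show "- real_of_int (B $ 1 $ 2) * real_of_int (A $ 1 $ 1 - A $ 2 $ 2 - (A' $ 1 $ 1 - A' $ 2 $ 2)) +
      real_of_int (A $ 1 $ 2) * real_of_int (B $ 1 $ 1 - B $ 2 $ 2 - (B' $ 1 $ 1 - B' $ 2 $ 2)) = 0"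
      using arg_cong[OF i1, of real_of_int] by (simp add: algebra_simps)
    show "real_of_int (B $ 2 $ 1) * real_of_int (A $ 1 $ 1 - A $ 2 $ 2 - (A' $ 1 $ 1 - A' $ 2 $ 2)) -
      real_of_int (A $ 2 $ 1) * real_of_int (B $ 1 $ 1 - B $ 2 $ 2 - (B' $ 1 $ 1 - B' $ 2 $ 2)) = 0"
      using arg_cong[OF i2, of real_of_int] by (simp add: algebra_simps)
    show "- real_of_int (B $ 1 $ 3) * real_of_int (A $ 1 $ 1 - A $ 3 $ 3 - (A' $ 1 $ 1 - A' $ 3 $ 3)) +
      real_of_int (A $ 1 $ 3) * real_of_int (B $ 1 $ 1 - B $ 3 $ 3 - (B' $ 1 $ 1 - B' $ 3 $ 3)) = 0"
      using arg_cong[OF i3, of real_of_int] by (simp add: algebra_simps)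
    show "real_of_int (B $ 3 $ 1) * real_of_int (A $ 1 $ 1 - A $ 3 $ 3 - (A' $ 1 $ 1 - A' $ 3 $ 3)) -
      real_of_int (A $ 3 $ 1) * real_of_int (B $ 1 $ 1 - B $ 3 $ 3 - (B' $ 1 $ 1 - B' $ 3 $ 3)) = 0"
      using arg_cong[OF i4, of real_of_int] by (simp add: algebra_simps)
    show "real_of_int (B $ 3 $ 2) *
      (real_of_int (A $ 1 $ 1 - A $ 2 $ 2 - (A' $ 1 $ 1 - A' $ 2 $ 2)) - real_of_int (A $ 1 $ 1 - A $ 3 $ 3 - (A' $ 1 $ 1 - A' $ 3 $ 3))) -
      real_of_int (A $ 3 $ 2) *
      (real_of_int (B $ 1 $ 1 - B $ 2 $ 2 - (B' $ 1 $ 1 - B' $ 2 $ 2)) - real_of_int (B $ 1 $ 1 - B $ 3 $ 3 - (B' $ 1 $ 1 - B' $ 3 $ 3))) = 0"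
      using arg_cong[OF i6, of real_of_int] by (simp add: algebra_simps)
    show "- real_of_int (B $ 2 $ 3) *
      (real_of_int (A $ 1 $ 1 - A $ 2 $ 2 - (A' $ 1 $ 1 - A' $ 2 $ 2)) - real_of_int (A $ 1 $ 1 - A $ 3 $ 3 - (A' $ 1 $ 1 - A' $ 3 $ 3))) +
      real_of_int (A $ 2 $ 3) *
      (real_of_int (B $ 1 $ 1 - B $ 2 $ 2 - (B' $ 1 $ 1 - B' $ 2 $ 2)) - real_of_int (B $ 1 $ 1 - B $ 3 $ 3 - (B' $ 1 $ 1 - B' $ 3 $ 3))) = 0"
      using arg_cong[OF i5, of real_of_int] by (simp add: algebra_simps)
  qed
qed

lemma card_fibers:
  assumes "finite (f ` S)" and "\<And>y. y \<in> f ` S \<Longrightarrow> finite {x\<in>S. f x = y} \<and> card {x\<in>S. f x = y} \<le> K"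
  shows "card S \<le> card (f ` S) * K"
proof -
  have S: "S = (\<Union>y\<in>f ` S. {x\<in>S. f x = y})" by auto
  have "card S \<le> (\<Sum>y\<in>f ` S. card {x\<in>S. f x = y})"
    by (subst S) (rule card_UN_le[OF assms(1)])
  also have "\<dots> \<le> (\<Sum>y\<in>f ` S. K)" by (rule sum_mono) (use assms(2) in blast)
  also have "\<dots> = card (f ` S) * K" by simp
  finally show ?thesis .
qed

lemma dl_bound:
  assumes "\<forall>i j. \<bar>A $ i $ j\<bar> \<le> N \<and> \<bar>B $ i $ j\<bar> \<le> N"
  shows "dl (A,B) $ j \<in> {-2*N..2*N}"
proof -
  have "j = 1 \<or> j = 2 \<or> j = 3 \<or> j = 4" using exhaust_4 by blast
  moreover have "\<bar>A$1$1\<bar> \<le> N" "\<bar>A$2$2\<bar> \<le> N" "\<bar>A$3$3\<bar> \<le> N" "\<bar>B$1$1\<bar> \<le> N" "\<bar>B$2$2\<bar> \<le> N" "\<bar>B$3$3\<bar> \<le> N"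
    using assms by auto
  ultimately show ?thesis by (auto simp: dl_simps)
qed

lemma fiber_bound:
  assumes N: "N \<ge> 0"
  shows "finite {x \<in> S_set N r. key x = y} \<and> card {x \<in> S_set N r. key x = y} \<le> nat (4*N+1) ^ (4 - r)"
proof (cases "{x \<in> S_set N r. key x = y} = {}")
  case True
  show ?thesis unfolding True by simp
next
  case False
  define F where "F = {x \<in> S_set N r. key x = y}"
  obtain A0 B0 where x0: "(A0,B0) \<in> F" using False unfolding F_def by auto
  define M0 where "M0 = Mmat A0 B0"
  have rk: "rank M0 = r" using x0 unfolding F_def M0_def S_set_def by auto
  obtain J where J: "card J \<le> CARD(4) - rank M0" "\<And>z. M0 *v z = 0 \<Longrightarrow> (\<forall>j\<in>J. z$j = 0) \<Longrightarrow> z = 0"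
    using null_coords[of M0] by blast
  define \<phi> where "\<phi> x = restrict (\<lambda>j. dl x $ j) J" for x
  have inj: "inj_on \<phi> F"
  proof (rule inj_onI)
    fix x x' assume x: "x \<in> F" and x': "x' \<in> F" and eq: "\<phi> x = \<phi> x'"
    obtain A B A' B' where xs: "x = (A,B)" "x' = (A',B')" by (cases x, cases x') auto
    have kx: "key (A,B) = key (A0,B0)" "key (A',B') = key (A0,B0)" using x x' x0 xs unfolding F_def by auto
    have c: "A ** B = B ** A" "A' ** B' = B' ** A'" using x x' xs unfolding F_def S_set_def by auto
    define z where "z = (\<chi> j. real_of_int (dl (A,B) $ j - dl (A',B') $ j))"
    have "Mmat A B *v z = 0" unfolding z_def by (rule comm_diff[OF c]) (use kx in simp)
    moreover have "Mmat A B = M0" unfolding M0_def by (rule key_Mmat[OF kx(1)])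
    ultimately have z0: "M0 *v z = 0" by simp
    have "\<forall>j\<in>J. z$j = 0"
    proof
      fix j assume "j \<in> J"
      then have "\<phi> x j = \<phi> x' j" using eq by simp
      then show "z$j = 0" using \<open>j \<in> J\<close> unfolding \<phi>_def z_def xs by simp
    qed
    then have "z = 0" using J(2) z0 by blast
    then have "dl x = dl x'" unfolding z_def xs by (simp add: vec_eq_iff)
    moreover have "key x = key x'" using kx xs by simp
    ultimately show "x = x'" using key_dl_inj by blast
  qed
  have img: "\<phi> ` F \<subseteq> PiE J (\<lambda>_. {-2*N..2*N})"
  proof
    fix p assume "p \<in> \<phi> ` F"
    then obtain A B where "(A,B) \<in> F" "p = \<phi> (A,B)" by auto
    then have "\<forall>i j. \<bar>A $ i $ j\<bar> \<le> N \<and> \<bar>B $ i $ j\<bar> \<le> N" "p = \<phi> (A,B)" unfolding F_def S_set_def by auto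
    then show "p \<in> PiE J (\<lambda>_. {-2*N..2*N})" unfolding \<phi>_def using dl_bound by auto
  qed
  have finP: "finite (PiE J (\<lambda>_. {-2*N..2*N}))" by (simp add: finite_PiE)
  have finF: "finite F" using inj img finP by (metis finite_imageD finite_subset)
  have "card F \<le> card (PiE J (\<lambda>_. {-2*N..2*N}))"
    using card_inj_on_le[OF inj img finP] .
  also have "\<dots> = nat (4*N+1) ^ card J" by (simp add: card_PiE)
  also have "\<dots> \<le> nat (4*N+1) ^ (4 - r)"
    using J(1) rk N by (intro power_increasing) auto
  finally show ?thesis using finF unfolding F_def by simp
qed

definition nrm :: "int \<times> int \<Rightarrow> int" where "nrm v = max \<bar>fst v\<bar> \<bar>snd v\<bar>"

definition box2 :: "int \<Rightarrow> (int \<times> int) set" where "box2 N = {-N..N} \<times> {-N..N}"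

lemma decomp:
  fixes a b c d N :: int
  assumes ab: "(a,b) \<noteq> (0,0)" and eq: "a*d = b*c"
    and bd: "\<bar>a\<bar> \<le> N" "\<bar>b\<bar> \<le> N" "\<bar>c\<bar> \<le> N" "\<bar>d\<bar> \<le> N"
  shows "\<exists>v s t. v \<in> box2 N - {(0,0)} \<and> \<bar>s\<bar> \<le> N div nrm v \<and> \<bar>t\<bar> \<le> N div nrm v \<and>
           (a,b) = (s * fst v, s * snd v) \<and> (c,d) = (t * fst v, t * snd v)"
proof -
  define g where "g = gcd a b"
  have gpos: "g > 0" using ab unfolding g_def by auto
  define v1 where "v1 = a div g"
  define v2 where "v2 = b div g"
  have a: "a = g * v1" unfolding v1_def g_def by simp
  have b: "b = g * v2" unfolding v2_def g_def by simp
  have cop: "coprime v1 v2" unfolding v1_def v2_def g_def using ab div_gcd_coprime by auto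
  obtain x y where xy: "x * v1 + y * v2 = 1"
    using bezout_int[of v1 v2] cop by (metis coprime_iff_gcd_eq_1)
  have vd: "v1 * d = v2 * c" using eq gpos unfolding a b by (simp add: mult.assoc)
  define t where "t = c * x + d * y"
  have tc: "t * v1 = c"
  proof -
    have "t * v1 = c * (x * v1) + y * (v1 * d)" unfolding t_def by (simp add: algebra_simps)
    also have "\<dots> = c * (x * v1 + y * v2)" using vd by (simp add: algebra_simps)
    finally show ?thesis using xy by simp
  qed
  have td: "t * v2 = d"
  proof -
    have "t * v2 = x * (v2 * c) + d * (y * v2)" unfolding t_def by (simp add: algebra_simps)
    also have "\<dots> = d * (x * v1 + y * v2)" using vd by (simp add: algebra_simps)
    finally show ?thesis using xy by simp
  qed
  have vnz: "(v1, v2) \<noteq> (0,0)" using ab a b by auto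
  have m: "nrm (v1,v2) > 0" using vnz unfolding nrm_def by auto
  have "\<bar>v1\<bar> \<le> \<bar>a\<bar>" "\<bar>v2\<bar> \<le> \<bar>b\<bar>" using gpos unfolding a b
    by (simp_all add: abs_mult mult_le_cancel_right1 zero_less_abs_iff)
  then have vbox: "(v1,v2) \<in> box2 N" using bd unfolding box2_def by auto
  have sN: "g * nrm (v1,v2) \<le> N" using bd gpos unfolding a b nrm_def by (auto simp: abs_mult)
  have tN: "\<bar>t\<bar> * nrm (v1,v2) \<le> N" using bd unfolding tc[symmetric] td[symmetric] nrm_def
    by (auto simp: abs_mult max_def)
  have s_le: "\<bar>g\<bar> \<le> N div nrm (v1,v2)"
  proof -
    have "g = (g * nrm (v1,v2)) div nrm (v1,v2)" using m by simp
    also have "\<dots> \<le> N div nrm (v1,v2)" using sN m by (intro zdiv_mono1) auto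
    finally show ?thesis using gpos by simp
  qed
  have t_le: "\<bar>t\<bar> \<le> N div nrm (v1,v2)"
  proof -
    have "\<bar>t\<bar> = (\<bar>t\<bar> * nrm (v1,v2)) div nrm (v1,v2)" using m by simp
    also have "\<dots> \<le> N div nrm (v1,v2)" using tN m by (intro zdiv_mono1) auto
    finally show ?thesis .
  qed
  show ?thesis
    apply (rule exI[of _ "(v1,v2)"], rule exI[of _ g], rule exI[of _ t])
    using vbox vnz s_le t_le a b tc td by (auto simp: mult.commute)
qed

lemma card_box2: "N \<ge> 0 \<Longrightarrow> card (box2 N) = nat (2*N+1) ^ 2"
  unfolding box2_def by (simp add: card_cartesian_product power2_eq_square)

lemma finite_box2[simp]: "finite (box2 N)" unfolding box2_def by simp

lemma shell_sum:
  "(\<Sum>v\<in>box2 (int n) - {(0,0)}. 1 / (real_of_int (nrm v))^2) \<le> 8 * harm n"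
proof (induction n)
  case 0
  have e: "box2 (int 0) - {(0,0)} = {}" unfolding box2_def by auto
  show ?case unfolding e by (simp add: harm_def)
next
  case (Suc n)
  define Sh where "Sh = box2 (int (Suc n)) - box2 (int n)"
  have sub: "box2 (int n) \<subseteq> box2 (int (Suc n))" unfolding box2_def by auto
  have U: "box2 (int (Suc n)) - {(0,0)} = (box2 (int n) - {(0,0)}) \<union> Sh"
    unfolding Sh_def using sub by (auto simp: box2_def)
  have D: "(box2 (int n) - {(0,0)}) \<inter> Sh = {}" unfolding Sh_def by auto
  have nrmSh: "nrm v = int n + 1" if "v \<in> Sh" for v
    using that unfolding Sh_def box2_def nrm_def by (cases v) auto
  have cSh: "card Sh = 8 * n + 8"
  proof -
    have "card Sh = card (box2 (int (Suc n))) - card (box2 (int n))"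
      unfolding Sh_def using sub by (simp add: card_Diff_subset)
    also have "\<dots> = (2 * n + 3)^2 - (2*n+1)^2" by (simp add: card_box2 nat_add_distrib nat_mult_distrib add.commute)
    also have "\<dots> = 8 * n + 8" by (simp add: power2_eq_square algebra_simps)
    finally show ?thesis .
  qed
  have "(\<Sum>v\<in>Sh. 1 / (real_of_int (nrm v))^2) = (\<Sum>v\<in>Sh. 1 / (real n + 1)^2)"
    by (rule sum.cong) (auto simp: nrmSh)
  also have "\<dots> = real (8 * n + 8) / (real n + 1)^2" using cSh by simp
  also have "\<dots> = 8 / (real n + 1)"
  proof -
    have p: "real n + 1 \<noteq> 0" by simp
    have "real (8 * n + 8) = 8 * (real n + 1)" by simp
    then show ?thesis using p by (simp add: power2_eq_square divide_simps)
  qed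
  finally have sh: "(\<Sum>v\<in>Sh. 1 / (real_of_int (nrm v))^2) = 8 / (real n + 1)" .
  have "(\<Sum>v\<in>box2 (int (Suc n)) - {(0,0)}. 1 / (real_of_int (nrm v))^2)
      = (\<Sum>v\<in>box2 (int n) - {(0,0)}. 1 / (real_of_int (nrm v))^2) + (\<Sum>v\<in>Sh. 1 / (real_of_int (nrm v))^2)"
    unfolding U by (rule sum.union_disjoint) (auto simp: Sh_def D)
  also have "\<dots> \<le> 8 * harm n + 8 / (real n + 1)" using Suc.IH sh by simp
  also have "\<dots> = 8 * harm (Suc n)" by (simp add: harm_Suc field_simps)
  finally show ?case .
qed

lemma harm_le_ln: "n \<ge> 1 \<Longrightarrow> harm n \<le> 1 + ln (real n)"
proof -
  assume n: "n \<ge> 1"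
  then obtain m where m: "n = Suc m" by (cases n) auto
  have "harm (Suc m) - ln (real (Suc m)) \<le> harm (Suc 0) - ln (real (Suc 0))"
    using decseq_harm_diff_ln unfolding decseq_def by blast
  then show ?thesis using m by (simp add: harm_Suc harm_def)
qed

definition Par :: "int \<Rightarrow> ((int \<times> int) \<times> (int \<times> int)) set" where
  "Par N = {pq \<in> box2 N \<times> box2 N. fst (fst pq) * snd (snd pq) = snd (fst pq) * fst (snd pq)}"

lemma card_Par_raw:
  assumes N: "N \<ge> 1"
  shows "real (card (Par N)) \<le> 2 * (2 * real_of_int N + 1)^2 + 72 * (real_of_int N)^2 * (1 + ln (real_of_int N))"
proof -
  define K where "K v = N div nrm v" for v
  define W where "W = Sigma (box2 N - {(0,0)}) (\<lambda>v. {-K v..K v} \<times> {-K v..K v})"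
  define \<mu> where "\<mu> w = (case w of (v, s, t) \<Rightarrow> ((s * fst v, s * snd v), (t * fst v, t * snd v)))" for w :: "(int\<times>int)\<times>int\<times>int"
  define Z1 where "Z1 = {(0::int,0::int)} \<times> box2 N"
  define Z2 where "Z2 = box2 N \<times> {(0::int,0::int)}"
  have finW: "finite W" unfolding W_def by auto
  have sub: "Par N \<subseteq> Z1 \<union> Z2 \<union> \<mu> ` W"
  proof
    fix pq assume pq: "pq \<in> Par N"
    obtain a b c d where pqd: "pq = ((a,b),(c,d))" by (cases pq) auto
    have bx: "\<bar>a\<bar> \<le> N" "\<bar>b\<bar> \<le> N" "\<bar>c\<bar> \<le> N" "\<bar>d\<bar> \<le> N" "a*d = b*c"
      using pq unfolding pqd Par_def box2_def by auto
    show "pq \<in> Z1 \<union> Z2 \<union> \<mu> ` W"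
    proof (cases "(a,b) = (0,0) \<or> (c,d) = (0,0)")
      case True
      then show ?thesis using pq unfolding pqd Par_def Z1_def Z2_def by auto
    next
      case False
      then have ab: "(a,b) \<noteq> (0,0)" by auto
      obtain v s t where vst: "v \<in> box2 N - {(0,0)}" "\<bar>s\<bar> \<le> N div nrm v" "\<bar>t\<bar> \<le> N div nrm v"
        "(a,b) = (s * fst v, s * snd v)" "(c,d) = (t * fst v, t * snd v)"
        using decomp[OF ab bx(5) bx(1-4)] by blast
      have "(v,s,t) \<in> W" using vst unfolding W_def K_def by auto
      moreover have "pq = \<mu> (v,s,t)" unfolding \<mu>_def pqd using vst by simp
      ultimately show ?thesis by blast
    qed
  qed
  have fin: "finite (Z1 \<union> Z2 \<union> \<mu> ` W)" using finW by (auto simp: Z1_def Z2_def)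
  have "card (Par N) \<le> card (Z1 \<union> Z2 \<union> \<mu> ` W)"
    by (rule card_mono[OF fin sub])
  also have "\<dots> \<le> card Z1 + card Z2 + card (\<mu> ` W)"
    by (meson add_le_mono card_Un_le le_refl order_trans)
  also have "\<dots> \<le> card Z1 + card Z2 + card W" using card_image_le[OF finW] by simp
  finally have c1: "card (Par N) \<le> card Z1 + card Z2 + card W" .
  have cZ: "card Z1 = nat (2*N+1)^2" "card Z2 = nat (2*N+1)^2"
    unfolding Z1_def Z2_def using N by (simp_all add: card_cartesian_product card_box2)
  have cW: "card W = (\<Sum>v\<in>box2 N - {(0,0)}. card ({-K v..K v} \<times> {-K v..K v}))"
    unfolding W_def by (rule card_SigmaI) auto
  have trm: "real (card ({-K v..K v} \<times> {-K v..K v})) \<le> 9 * (real_of_int N)^2 * (1 / (real_of_int (nrm v))^2)"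
    if v: "v \<in> box2 N - {(0,0)}" for v
  proof -
    have m: "nrm v \<ge> 1" "nrm v \<le> N" using v unfolding nrm_def box2_def by (cases v, auto)+
    have K1: "K v \<ge> 1" unfolding K_def using m pos_imp_zdiv_pos_iff[of "nrm v" N] by simp
    have KN: "K v * nrm v \<le> N"
    proof -
      have "K v * nrm v = N - N mod nrm v" unfolding K_def by (simp add: minus_mod_eq_div_mult)
      moreover have "N mod nrm v \<ge> 0" using m by simp
      ultimately show ?thesis by simp
    qed
    have KNr: "real_of_int (K v) \<le> real_of_int N / real_of_int (nrm v)"
      using KN m by (simp add: field_simps) (metis of_int_le_iff of_int_mult)
    have "real (card ({-K v..K v} \<times> {-K v..K v})) = (2 * real_of_int (K v) + 1)^2"
      using K1 by (simp add: card_cartesian_product power2_eq_square)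
    also have "\<dots> \<le> (3 * real_of_int (K v))^2" using K1 by (intro power_mono) auto
    also have "\<dots> \<le> (3 * (real_of_int N / real_of_int (nrm v)))^2" using K1 KNr by (intro power_mono) auto
    also have "\<dots> = 9 * (real_of_int N)^2 * (1 / (real_of_int (nrm v))^2)" by (simp add: power_divide power_mult_distrib)
    finally show ?thesis .
  qed
  have "real (card W) \<le> (\<Sum>v\<in>box2 N - {(0,0)}. 9 * (real_of_int N)^2 * (1 / (real_of_int (nrm v))^2))"
    unfolding cW of_nat_sum by (rule sum_mono) (rule trm)
  also have "\<dots> = 9 * (real_of_int N)^2 * (\<Sum>v\<in>box2 N - {(0,0)}. 1 / (real_of_int (nrm v))^2)"
    by (simp add: sum_distrib_left)
  also have "\<dots> \<le> 9 * (real_of_int N)^2 * (8 * harm (nat N))"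
    using shell_sum[of "nat N"] N by (intro mult_left_mono) auto
  also have "\<dots> \<le> 9 * (real_of_int N)^2 * (8 * (1 + ln (real_of_int N)))"
    using harm_le_ln[of "nat N"] N by (intro mult_left_mono) auto
  also have "\<dots> = 72 * (real_of_int N)^2 * (1 + ln (real_of_int N))" by (simp add: algebra_simps)
  finally have cWb: "real (card W) \<le> 72 * (real_of_int N)^2 * (1 + ln (real_of_int N))" .
  have "real (card Z1) = (2 * real_of_int N + 1)^2" "real (card Z2) = (2 * real_of_int N + 1)^2"
    using cZ N by simp_all
  then show ?thesis using c1 cWb
    by (smt (verit) of_nat_add of_nat_mono)
qed

lemma card_S_le:
  assumes N: "N \<ge> 0" and sub: "key ` S_set N r \<subseteq> T" and finT: "finite T"
  shows "card (S_set N r) \<le> card T * nat (4*N+1) ^ (4 - r)"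
proof -
  have fk: "finite (key ` S_set N r)" using sub finT finite_subset by blast
  have "card (S_set N r) \<le> card (key ` S_set N r) * nat (4*N+1) ^ (4 - r)"
    by (rule card_fibers[OF fk]) (use fiber_bound[OF N] in blast)
  also have "\<dots> \<le> card T * nat (4*N+1) ^ (4 - r)"
    by (intro mult_right_mono card_mono[OF finT sub]) simp
  finally show ?thesis .
qed

lemma key_box:
  assumes "(A,B) \<in> S_set N r"
  shows "snd (snd (snd (key (A,B)))) \<in> box2 N"
    "fst (key (A,B)) \<in> box2 N \<times> box2 N"
    "fst (snd (key (A,B))) \<in> box2 N \<times> box2 N"
    "fst (snd (snd (key (A,B)))) \<in> box2 N \<times> box2 N"
proof -
  have h0: "\<forall>i j. \<bar>A $ i $ j\<bar> \<le> N \<and> \<bar>B $ i $ j\<bar> \<le> N" using assms unfolding S_set_def by auto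
  have h: "A$i$j \<in> {-N..N} \<and> B$i$j \<in> {-N..N}" for i j
  proof -
    have "\<bar>A $ i $ j\<bar> \<le> N" "\<bar>B $ i $ j\<bar> \<le> N" using h0 by blast+
    then show ?thesis by (simp add: abs_le_iff)
  qed
  show "snd (snd (snd (key (A,B)))) \<in> box2 N"
    "fst (key (A,B)) \<in> box2 N \<times> box2 N"
    "fst (snd (key (A,B))) \<in> box2 N \<times> box2 N"
    "fst (snd (snd (key (A,B)))) \<in> box2 N \<times> box2 N"
    unfolding key_def box2_def using h by auto
qed

definition z0 :: "(int \<times> int) \<times> (int \<times> int)" where "z0 = ((0,0),(0,0))"

lemma S0_key: "key ` S_set N 0 \<subseteq> {z0} \<times> {z0} \<times> {z0} \<times> box2 N"
proof
  fix y assume "y \<in> key ` S_set N 0"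
  then obtain A B where AB: "(A,B) \<in> S_set N 0" "y = key (A,B)" by auto
  have "rank (Mmat A B) = 0" using AB unfolding S_set_def by auto
  then have "\<not> g1nz A B \<and> \<not> g2nz A B \<and> \<not> g3nz A B" by (rule rank0_zero)
  then show "y \<in> {z0} \<times> {z0} \<times> {z0} \<times> box2 N"
    using key_box[OF AB(1)] AB(2) unfolding g1nz_def g2nz_def g3nz_def z0_def
    by (auto simp: key_def)
qed

lemma S1_key: "key ` S_set N 1 \<subseteq> ((box2 N \<times> box2 N) \<times> {z0} \<times> {z0} \<times> box2 N) \<union>
   ({z0} \<times> (box2 N \<times> box2 N) \<times> {z0} \<times> box2 N) \<union> ({z0} \<times> {z0} \<times> (box2 N \<times> box2 N) \<times> box2 N)"
proof
  fix y assume "y \<in> key ` S_set N 1"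
  then obtain A B where AB: "(A,B) \<in> S_set N 1" "y = key (A,B)" by auto
  have "rank (Mmat A B) \<le> 1" using AB unfolding S_set_def by auto
  note g = rank_le1_groups[OF this]
  note kb = key_box[OF AB(1)]
  have z1: "\<not> g1nz A B \<Longrightarrow> fst (key (A,B)) = z0" unfolding g1nz_def z0_def key_def by auto
  have z2: "\<not> g2nz A B \<Longrightarrow> fst (snd (key (A,B))) = z0" unfolding g2nz_def z0_def key_def by auto
  have z3: "\<not> g3nz A B \<Longrightarrow> fst (snd (snd (key (A,B)))) = z0" unfolding g3nz_def z0_def key_def by auto
  have yk: "y = (fst (key (A,B)), fst (snd (key (A,B))), fst (snd (snd (key (A,B)))), snd (snd (snd (key (A,B)))))"
    using AB(2) by simp
  show "y \<in> ((box2 N \<times> box2 N) \<times> {z0} \<times> {z0} \<times> box2 N) \<union>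
   ({z0} \<times> (box2 N \<times> box2 N) \<times> {z0} \<times> box2 N) \<union> ({z0} \<times> {z0} \<times> (box2 N \<times> box2 N) \<times> box2 N)"
  proof (cases "g1nz A B")
    case True
    then have "\<not> g2nz A B" "\<not> g3nz A B" using g by auto
    then have "y \<in> (box2 N \<times> box2 N) \<times> {z0} \<times> {z0} \<times> box2 N"
      unfolding yk using z2 z3 kb by (auto simp: mem_Times_iff)
    then show ?thesis by blast
  next
    case False
    note f1 = this
    show ?thesis
    proof (cases "g2nz A B")
      case True
      then have "\<not> g3nz A B" using g by auto
      then have "y \<in> {z0} \<times> (box2 N \<times> box2 N) \<times> {z0} \<times> box2 N"
        unfolding yk using z1 z3 f1 kb by (auto simp: mem_Times_iff)
      then show ?thesis by blast
    next
      case False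
      then have "y \<in> {z0} \<times> {z0} \<times> (box2 N \<times> box2 N) \<times> box2 N"
        unfolding yk using z1 z2 f1 kb by (auto simp: mem_Times_iff)
      then show ?thesis by blast
    qed
  qed
qed

lemma S3_key: "key ` S_set N 3 \<subseteq> Par N \<times> Par N \<times> Par N \<times> box2 N"
proof
  fix y assume "y \<in> key ` S_set N 3"
  then obtain A B where AB: "(A,B) \<in> S_set N 3" "y = key (A,B)" by auto
  have c: "A ** B = B ** A" "rank (Mmat A B) \<noteq> 4" using AB unfolding S_set_def by auto
  note gp = groups_par[OF c]
  note kb = key_box[OF AB(1)]
  show "y \<in> Par N \<times> Par N \<times> Par N \<times> box2 N"
    using kb gp AB(2) unfolding Par_def by (auto simp: key_def)
qed

theorem lemma4p1:
  shows "\<exists>C > 0. \<forall>N :: int. N \<ge> 2 \<longrightarrow>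
    real (card (S_set N 0) + card (S_set N 1) + card (S_set N 3))
      \<le> C * real_of_int N ^ 9 * (ln (real_of_int N)) ^ 3"
proof (intro exI[of _ "10^9"] conjI allI impI)
  show "(0::real) < 10^9" by simp
  fix N :: int assume N2: "N \<ge> 2"
  have N0: "N \<ge> 0" using N2 by simp
  define n where "n = real_of_int N"
  define L where "L = ln n"
  have n2: "n \<ge> 2" using N2 unfolding n_def by simp
  have L23: "L \<ge> 2/3"
  proof -
    have "ln 2 \<le> ln n" using n2 by simp
    then show ?thesis using ln2_ge_two_thirds unfolding L_def by linarith
  qed
  have rb: "real (nat (2*N+1)) = 2*n+1" "real (nat (4*N+1)) = 4*n+1" unfolding n_def using N0 by simp_all
  have fb: "finite (box2 N)" by simp
  have fP: "finite (Par N)" unfolding Par_def by simp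
  have "card (S_set N 0) \<le> card ({z0} \<times> {z0} \<times> {z0} \<times> box2 N) * nat (4*N+1) ^ (4 - 0)"
    by (rule card_S_le[OF N0 S0_key]) simp
  also have "\<dots> = nat (2*N+1)^2 * nat (4*N+1) ^ 4" by (simp add: card_cartesian_product card_box2 N0)
  finally have "real (card (S_set N 0)) \<le> real (nat (2*N+1)^2 * nat (4*N+1) ^ 4)" by (simp only: of_nat_le_iff)
  also have "\<dots> = (2*n+1)^2 * (4*n+1)^4" using rb by simp
  finally have c0: "real (card (S_set N 0)) \<le> (2*n+1)^2 * (4*n+1)^4" .
  define T where "T = ((box2 N \<times> box2 N) \<times> {z0} \<times> {z0} \<times> box2 N) \<union>
   ({z0} \<times> (box2 N \<times> box2 N) \<times> {z0} \<times> box2 N) \<union> ({z0} \<times> {z0} \<times> (box2 N \<times> box2 N) \<times> box2 N)"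
  have fT: "finite T" unfolding T_def by simp
  have cT: "card T \<le> 3 * nat (2*N+1)^6"
  proof -
    have "card T \<le> card ((box2 N \<times> box2 N) \<times> {z0} \<times> {z0} \<times> box2 N) +
      card ({z0} \<times> (box2 N \<times> box2 N) \<times> {z0} \<times> box2 N) + card ({z0} \<times> {z0} \<times> (box2 N \<times> box2 N) \<times> box2 N)"
      unfolding T_def by (meson add_le_mono card_Un_le le_refl order_trans)
    also have "\<dots> = 3 * nat (2*N+1)^6" by (simp add: card_cartesian_product card_box2 N0 power_add[symmetric])
    finally show ?thesis .
  qed
  have "card (S_set N 1) \<le> card T * nat (4*N+1) ^ (4 - 1)"
    by (rule card_S_le[OF N0 S1_key[of N, folded T_def] fT])
  also have "\<dots> \<le> 3 * nat (2*N+1)^6 * nat (4*N+1) ^ 3" using cT by simp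
  finally have "real (card (S_set N 1)) \<le> real (3 * nat (2*N+1)^6 * nat (4*N+1) ^ 3)" by (simp only: of_nat_le_iff)
  also have "\<dots> = 3 * (2*n+1)^6 * (4*n+1)^3" using rb by simp
  finally have c1: "real (card (S_set N 1)) \<le> 3 * (2*n+1)^6 * (4*n+1)^3" .
  have "card (S_set N 3) \<le> card (Par N \<times> Par N \<times> Par N \<times> box2 N) * nat (4*N+1) ^ (4 - 3)"
    by (rule card_S_le[OF N0 S3_key]) (simp add: fP)
  also have "\<dots> = card (Par N) ^ 3 * nat (2*N+1)^2 * nat (4*N+1)"
    by (simp add: card_cartesian_product card_box2 N0 power3_eq_cube)
  finally have "real (card (S_set N 3)) \<le> real (card (Par N) ^ 3 * nat (2*N+1)^2 * nat (4*N+1))" by (simp only: of_nat_le_iff)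
  also have "\<dots> = real (card (Par N)) ^ 3 * (2*n+1)^2 * (4*n+1)" using rb by simp
  finally have c3: "real (card (S_set N 3)) \<le> real (card (Par N)) ^ 3 * (2*n+1)^2 * (4*n+1)" .
  define P where "P = real (card (Par N))"
  have P0: "P \<ge> 0" unfolding P_def by simp
  have Praw: "P \<le> 2 * (2 * n + 1)^2 + 72 * n^2 * (1 + L)"
    using card_Par_raw[of N] N2 unfolding P_def n_def L_def by simp
  have a3: "2*n+1 \<le> 3*n" "0 \<le> 2*n+1" using n2 by simp_all
  have b5: "4*n+1 \<le> 5*n" "0 \<le> 4*n+1" using n2 by simp_all
  have sq: "(2*n+1)^2 \<le> 9 * n^2" using power_mono[OF a3(1) a3(2), of 2] by (simp add: power_mult_distrib)
  have qL: "n^2 \<le> 3/2 * (n^2 * L)"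
  proof -
    have "n^2 * 1 \<le> n^2 * (3/2 * L)" by (rule mult_left_mono) (use L23 in auto)
    then show ?thesis by (simp add: algebra_simps)
  qed
  have Pb: "P \<le> 207 * (n^2 * L)" using Praw sq qL by (simp add: algebra_simps) 
  have PL0: "0 \<le> n^2 * L" using L23 by simp
  have c3b: "real (card (S_set N 3)) \<le> (207 * (n^2 * L))^3 * (3*n)^2 * (5*n)"
  proof -
    have "P ^ 3 * (2*n+1)^2 * (4*n+1) \<le> (207 * (n^2 * L))^3 * (3*n)^2 * (5*n)"
      by (intro mult_mono power_mono Pb a3 b5 P0) (use n2 PL0 in auto)
    then show ?thesis using c3 unfolding P_def by linarith
  qed
  have c1b: "real (card (S_set N 1)) \<le> 3 * (3*n)^6 * (5*n)^3"
  proof -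
    have "3 * (2*n+1)^6 * (4*n+1)^3 \<le> 3 * (3*n)^6 * (5*n)^3"
      by (intro mult_mono power_mono mult_left_mono a3 b5) (use n2 in auto)
    then show ?thesis using c1 by linarith
  qed
  have c0b: "real (card (S_set N 0)) \<le> (3*n)^2 * (5*n)^4"
  proof -
    have "(2*n+1)^2 * (4*n+1)^4 \<le> (3*n)^2 * (5*n)^4"
      by (intro mult_mono power_mono a3 b5) (use n2 in auto)
    then show ?thesis using c0 by linarith
  qed
  have n9: "n^9 \<ge> 0" using n2 by simp
  have L3: "L^3 \<ge> 8/27"
  proof -
    have "(2/3::real)^3 \<le> L^3" by (rule power_mono[OF L23]) simp
    moreover have "(2/3::real)^3 = 8/27" by (simp add: power3_eq_cube)
    ultimately show ?thesis by linarith
  qed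
  have one: "n^9 \<le> 27/8 * (n^9 * L^3)"
  proof -
    have "n^9 * (8/27) \<le> n^9 * L^3" by (rule mult_left_mono[OF L3 n9])
    then show ?thesis by simp
  qed
  have n69: "n^6 \<le> n^9"
  proof -
    have "n^6 * 1 \<le> n^6 * n^3" using n2 by (intro mult_left_mono) (simp_all add: one_le_power)
    then show ?thesis by (simp add: power_add[symmetric])
  qed
  have e3: "(207 * (n^2 * L))^3 * (3*n)^2 * (5*n) = 399138435 * (n^9 * L^3)"
    by algebra
  have e1: "3 * (3*n)^6 * (5*n)^3 = 273375 * n^9"
    by (simp add: power_mult_distrib algebra_simps power_add[symmetric])
  have e0: "(3*n)^2 * (5*n)^4 = 5625 * n^6"
    by (simp add: power_mult_distrib algebra_simps power_add[symmetric])
  have "real (card (S_set N 0) + card (S_set N 1) + card (S_set N 3))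
      = real (card (S_set N 0)) + real (card (S_set N 1)) + real (card (S_set N 3))" by simp
  also have "\<dots> \<le> 5625 * n^6 + 273375 * n^9 + 399138435 * (n^9 * L^3)"
    using c0b c1b c3b e0 e1 e3 by linarith
  also have "\<dots> \<le> 1000000000 * (n^9 * L^3)" using one n69 n9 by linarith
  also have "\<dots> = 10^9 * (n^9 * L^3)" by simp
  finally show "real (card (S_set N 0) + card (S_set N 1) + card (S_set N 3))
      \<le> 10^9 * real_of_int N ^ 9 * (ln (real_of_int N)) ^ 3"
    unfolding n_def L_def by (simp add: mult.assoc)
qed

end
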